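(* Let $\nu,\mu\in\Lambda(n;r)$. Then $\xi_\nu J_R(n,r)\xi_\mu=0$ unless $\nu\triangleright\mu$. If $\nu\triangleright\mu$, then $\{\xi_\omega:\omega\in\Lambda^1(n,n;r),\ \omega^1=\mu,\ \omega^2=\nu\}$ is an $R$-basis of the free $R$-module $\xi_\nu J_R(n,r)\xi_\mu$.
   Context: $R$ commutative ring with identity, $n,r$ positive integers. $\Lambda(n;r)$: compositions $(\lambda_1,\dots,\lambda_n)\in\mathbb{N}_0^n$ with sum $r$. $\Lambda(n,n;r)$: $n\times n$ nonnegative integer matrices with total sum $r$; $(\omega^1)_t=\sum_s\omega_{st}$, $(\omega^2)_s=\sum_t\omega_{st}$. For $i,j\in I(n,r)=\{1,\dots,n\}^r$, $\operatorname{wt}(i,j)_{st}=\#\{q:i_q=s,j_q=t\}$, $(i,j)\in\omega$ means $\operatorname{wt}(i,j)=\omega$. $S_R(n,r)=\mathrm{End}_{R\Sigma_r}((R^n)^{\otimes r})$ ($e_i\sigma=e_{i\sigma}$), with basis $\xi_\omega=\sum_{(i,j)\in\omega}e_{i,j}$ ($e_{i,j}e_k=\delta_{jk}e_i$); $\xi_\lambda:=\xi_{\mathrm{diag}(\lambda)}$ for $\lambda\in\Lambda(n;r)$. $\Lambda^1(n,n;r)$ is the set of upper triangular $\omega$ with $\sum_{k\le l}(l-k)\omega_{kl}\ge1$, and $J_R(n,r)$ is the $R$-span of $\{\xi_\omega:\omega\in\Lambda^1(n,n;r)\}$. Dominance: $\nu\trianglerighteq\mu$ if $\sum_{s=1}^t\nu_s\ge\sum_{s=1}^t\mu_s$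 for all $t$, and $\nu\triangleright\mu$ if $\nu\trianglerighteq\mu$ and $\nu\ne\mu$. *)

theory Defs
  imports "HOL-Combinatorics.Permutations"
begin

text \<open>Multi-indices I(n,r): lists of length r with entries in {1..n}
  (position q, 0-based, holds the entry i_(q+1)).\<close>
definition Iset :: "nat \<Rightarrow> nat \<Rightarrow> nat list set" where
  "Iset n r = {i. length i = r \<and> set i \<subseteq> {1..n}}"

definition comps :: "nat \<Rightarrow> nat \<Rightarrow> (nat \<Rightarrow> nat) set" where
  "comps n r = {l. (\<forall>s. s \<notin> {1..n} \<longrightarrow> l s = 0) \<and> (\<Sum>s=1..n. l s) = r}"

definition mats :: "nat \<Rightarrow> nat \<Rightarrow> (nat \<Rightarrow> nat \<Rightarrow> nat) set" where
  "mats n r = {w. (\<forall>s t. s \<notin> {1..n} \<or> t \<notin> {1..n} \<longrightarrow> w s t = 0)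
                 \<and> (\<Sum>s=1..n. \<Sum>t=1..n. w s t) = r}"

definition omega1 :: "nat \<Rightarrow> (nat \<Rightarrow> nat \<Rightarrow> nat) \<Rightarrow> nat \<Rightarrow> nat" where
  "omega1 n w t = (\<Sum>s=1..n. w s t)"

definition omega2 :: "nat \<Rightarrow> (nat \<Rightarrow> nat \<Rightarrow> nat) \<Rightarrow> nat \<Rightarrow> nat" where
  "omega2 n w s = (\<Sum>t=1..n. w s t)"

definition wt :: "nat list \<Rightarrow> nat list \<Rightarrow> nat \<Rightarrow> nat \<Rightarrow> nat" where
  "wt i j s t = card {q. q < length i \<and> i ! q = s \<and> j ! q = t}"

definition diagm :: "(nat \<Rightarrow> nat) \<Rightarrow> nat \<Rightarrow> nat \<Rightarrow> nat" where
  "diagm l s t = (if s = t then l s else 0)"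

definition Lambda1 :: "nat \<Rightarrow> nat \<Rightarrow> (nat \<Rightarrow> nat \<Rightarrow> nat) set" where
  "Lambda1 n r = {w \<in> mats n r. (\<forall>k l. l < k \<longrightarrow> w k l = 0)
       \<and> (\<Sum>k=1..n. \<Sum>l=1..n. if k \<le> l then (l - k) * w k l else 0) \<ge> 1}"

text \<open>Endomorphisms of (R^n)^{\<otimes> r} are represented by their matrices w.r.t. the
  basis e_i, i \<in> I(n,r) (entries outside I(n,r) x I(n,r) are zero):
  A e_j = sum_i A i j e_i; composition is matrix multiplication.\<close>
type_synonym 'a smat = "nat list \<Rightarrow> nat list \<Rightarrow> 'a"

definition mmul :: "nat \<Rightarrow> nat \<Rightarrow> 'a::comm_ring_1 smat \<Rightarrow> 'a smat \<Rightarrow> 'a smat" where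
  "mmul n r A B = (\<lambda>i k. \<Sum>j\<in>Iset n r. A i j * B j k)"

text \<open>S_R(n,r): endomorphisms commuting with the place-permutation action
  e_i sigma = e_(i sigma).\<close>
definition schur :: "nat \<Rightarrow> nat \<Rightarrow> ('a::comm_ring_1) smat set" where
  "schur n r = {A. (\<forall>i j. i \<notin> Iset n r \<or> j \<notin> Iset n r \<longrightarrow> A i j = 0) \<and>
     (\<forall>\<sigma> i j. \<sigma> permutes {..<r} \<longrightarrow> i \<in> Iset n r \<longrightarrow> j \<in> Iset n r \<longrightarrow>
        A (map (\<lambda>q. i ! \<sigma> q) [0..<r]) (map (\<lambda>q. j ! \<sigma> q) [0..<r]) = A i j)}"

definition xi :: "nat \<Rightarrow> nat \<Rightarrow> (nat \<Rightarrow> nat \<Rightarrow> nat) \<Rightarrow> 'a::comm_ring_1 smat" where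
  "xi n r w = (\<lambda>i j. if i \<in> Iset n r \<and> j \<in> Iset n r \<and> wt i j = w then 1 else 0)"

definition xil :: "nat \<Rightarrow> nat \<Rightarrow> (nat \<Rightarrow> nat) \<Rightarrow> 'a::comm_ring_1 smat" where
  "xil n r l = xi n r (diagm l)"

definition Jset :: "nat \<Rightarrow> nat \<Rightarrow> ('a::comm_ring_1) smat set" where
  "Jset n r = {x. \<exists>c. x = (\<lambda>i j. \<Sum>w\<in>Lambda1 n r. c w * xi n r w i j)}"

definition dominates :: "nat \<Rightarrow> (nat \<Rightarrow> nat) \<Rightarrow> (nat \<Rightarrow> nat) \<Rightarrow> bool" where
  "dominates n a b = (\<forall>t\<in>{1..n}. (\<Sum>s=1..t. b s) \<le> (\<Sum>s=1..t. a s))"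

definition sdominates :: "nat \<Rightarrow> (nat \<Rightarrow> nat) \<Rightarrow> (nat \<Rightarrow> nat) \<Rightarrow> bool" where
  "sdominates n a b = (dominates n a b \<and> a \<noteq> b)"

definition is_basis :: "'b set \<Rightarrow> ('b \<Rightarrow> 'a::comm_ring_1 smat) \<Rightarrow> 'a smat set \<Rightarrow> bool" where
  "is_basis X f M =
     ((\<forall>w\<in>X. f w \<in> M)
      \<and> (\<forall>c. (\<lambda>i j. \<Sum>w\<in>X. c w * f w i j) = (\<lambda>i j. 0) \<longrightarrow> (\<forall>w\<in>X. c w = 0))
      \<and> (\<forall>x\<in>M. \<exists>c. x = (\<lambda>i j. \<Sum>w\<in>X. c w * f w i j)))"

end

theory Submission imports Defs begin

definition cnt :: "nat list \<Rightarrow> nat \<Rightarrow> nat" where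
  "cnt i s = card {q. q < length i \<and> i ! q = s}"

lemma finite_Iset: "finite (Iset n r)"
proof -
  have "Iset n r = {xs. set xs \<subseteq> {1..n} \<and> length xs = r}" unfolding Iset_def by auto
  thus ?thesis using finite_lists_length_eq[of "{1..n}" r] by simp
qed

lemma Iset_nth: "i \<in> Iset n r \<Longrightarrow> q < r \<Longrightarrow> i ! q \<in> {1..n}"
  unfolding Iset_def by (auto intro: nth_mem)

lemma finite_mats: "finite (mats n r)"
proof -
  let ?B = "{f::nat\<Rightarrow>nat. \<forall>t. (t \<in> {1..n} \<longrightarrow> f t \<in> {0..r}) \<and> (t \<notin> {1..n} \<longrightarrow> f t = 0)}"
  have fB: "finite ?B" using finite_set_of_finite_funs[of "{1..n}" "{0..r}" 0] by simp
  have "finite {w::nat\<Rightarrow>nat\<Rightarrow>nat. \<forall>s. (s \<in> {1..n} \<longrightarrow> w s \<in> ?B) \<and> (s \<notin> {1..n} \<longrightarrow> w s = (\<lambda>_. 0))}"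
    using finite_set_of_finite_funs[OF _ fB, of "{1..n}" "\<lambda>_. 0"] by simp
  moreover have "mats n r \<subseteq> {w::nat\<Rightarrow>nat\<Rightarrow>nat. \<forall>s. (s \<in> {1..n} \<longrightarrow> w s \<in> ?B) \<and> (s \<notin> {1..n} \<longrightarrow> w s = (\<lambda>_. 0))}"
  proof
    fix w assume w: "w \<in> mats n r"
    have z: "\<And>s t. s \<notin> {1..n} \<or> t \<notin> {1..n} \<Longrightarrow> w s t = 0" and sm: "(\<Sum>s=1..n. \<Sum>t=1..n. w s t) = r"
      using w unfolding mats_def by auto
    have le: "w s t \<le> r" if "s \<in> {1..n}" "t \<in> {1..n}" for s t
    proof -
      have "w s t \<le> (\<Sum>t=1..n. w s t)" using that by (intro member_le_sum) auto
      also have "\<dots> \<le> (\<Sum>s=1..n. \<Sum>t=1..n. w s t)" using that by (intro member_le_sum[where f="\<lambda>s. \<Sum>t=1..n. w s t"]) auto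
      finally show ?thesis using sm by simp
    qed
    show "w \<in> {w::nat\<Rightarrow>nat\<Rightarrow>nat. \<forall>s. (s \<in> {1..n} \<longrightarrow> w s \<in> ?B) \<and> (s \<notin> {1..n} \<longrightarrow> w s = (\<lambda>_. 0))}"
      using z le by (auto simp: fun_eq_iff)
  qed
  ultimately show ?thesis by (rule finite_subset[rotated])
qed

lemma finite_Lambda1: "finite (Lambda1 n r)"
  using finite_mats[of n r] unfolding Lambda1_def by (rule finite_subset[rotated]) auto

lemma omega2_wt:
  assumes "i \<in> Iset n r" "j \<in> Iset n r"
  shows "omega2 n (wt i j) = cnt i"
proof
  fix s
  have li: "length i = r" "length j = r" using assms unfolding Iset_def by auto
  let ?S = "{q. q < r \<and> i ! q = s}"
  have "(\<Sum>t\<in>{1..n}. \<Sum>x\<in>{x \<in> ?S. j ! x = t}. (1::nat)) = (\<Sum>x\<in>?S. 1)"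
    by (rule sum.group) (use Iset_nth[OF assms(2)] in auto)
  moreover have "{x \<in> ?S. j ! x = t} = {q. q < length i \<and> i ! q = s \<and> j ! q = t}" for t
    using li by auto
  ultimately show "omega2 n (wt i j) s = cnt i s"
    unfolding omega2_def wt_def cnt_def using li by simp
qed

lemma omega1_wt:
  assumes "i \<in> Iset n r" "j \<in> Iset n r"
  shows "omega1 n (wt i j) = cnt j"
proof
  fix t
  have li: "length i = r" "length j = r" using assms unfolding Iset_def by auto
  let ?S = "{q. q < r \<and> j ! q = t}"
  have "(\<Sum>s\<in>{1..n}. \<Sum>x\<in>{x \<in> ?S. i ! x = s}. (1::nat)) = (\<Sum>x\<in>?S. 1)"
    by (rule sum.group) (use Iset_nth[OF assms(1)] in auto)
  moreover have "{x \<in> ?S. i ! x = s} = {q. q < length i \<and> i ! q = s \<and> j ! q = t}" for s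
    using li by auto
  ultimately show "omega1 n (wt i j) t = cnt j t"
    unfolding omega1_def wt_def cnt_def using li by simp
qed

lemma xil_eq: "xil n r \<nu> i j = (if i \<in> Iset n r \<and> cnt i = \<nu> \<and> j = i then 1 else 0)"
proof -
  have "(i \<in> Iset n r \<and> j \<in> Iset n r \<and> wt i j = diagm \<nu>) \<longleftrightarrow> (i \<in> Iset n r \<and> cnt i = \<nu> \<and> j = i)"
  proof
    assume a: "i \<in> Iset n r \<and> j \<in> Iset n r \<and> wt i j = diagm \<nu>"
    have li: "length i = r" "length j = r" using a unfolding Iset_def by auto
    have eq: "i = j"
    proof (rule nth_equalityI)
      show "length i = length j" using li by simp
      fix q assume q: "q < length i"
      show "i ! q = j ! q"
      proof (rule ccontr)
        assume ne: "i ! q \<noteq> j ! q"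
        have "q \<in> {p. p < length i \<and> i ! p = i ! q \<and> j ! p = j ! q}" using q by simp
        hence "card {p. p < length i \<and> i ! p = i ! q \<and> j ! p = j ! q} \<noteq> 0"
          by (metis (no_types, lifting) card_0_eq empty_iff finite_nat_set_iff_bounded mem_Collect_eq)
        moreover have "wt i j (i!q) (j!q) = 0" using a ne by (simp add: diagm_def)
        ultimately show False unfolding wt_def by simp
      qed
    qed
    have "cnt i s = \<nu> s" for s
    proof -
      have "cnt i s = wt i i s s" unfolding cnt_def wt_def by simp
      thus ?thesis using a eq by (simp add: diagm_def)
    qed
    thus "i \<in> Iset n r \<and> cnt i = \<nu> \<and> j = i" using a eq by auto
  next
    assume a: "i \<in> Iset n r \<and> cnt i = \<nu> \<and> j = i"
    have "wt i i = diagm \<nu>"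
    proof (intro ext)
      fix s t show "wt i i s t = diagm \<nu> s t"
        using a unfolding wt_def diagm_def cnt_def by auto
    qed
    thus "i \<in> Iset n r \<and> j \<in> Iset n r \<and> wt i j = diagm \<nu>" using a by auto
  qed
  thus ?thesis unfolding xil_def xi_def by simp
qed

lemma triple:
  "mmul n r (mmul n r (xil n r \<nu>) x) (xil n r \<mu>) =
   (\<lambda>i k. if i \<in> Iset n r \<and> cnt i = \<nu> \<and> k \<in> Iset n r \<and> cnt k = \<mu> then x i k else 0)"
proof -
  have 1: "mmul n r (xil n r \<nu>) x = (\<lambda>i k. if i \<in> Iset n r \<and> cnt i = \<nu> then x i k else 0)"
  proof (intro ext)
    fix i k
    have "mmul n r (xil n r \<nu>) x i k = (\<Sum>j\<in>Iset n r. if j = i then (if i \<in> Iset n r \<and> cnt i = \<nu> then x i k else 0) else 0)"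
      unfolding mmul_def xil_eq by (intro sum.cong) auto
    thus "mmul n r (xil n r \<nu>) x i k = (if i \<in> Iset n r \<and> cnt i = \<nu> then x i k else 0)"
      using finite_Iset by simp
  qed
  show ?thesis
  proof (intro ext)
    fix i k
    have "mmul n r (mmul n r (xil n r \<nu>) x) (xil n r \<mu>) i k =
      (\<Sum>j\<in>Iset n r. if j = k then (if i \<in> Iset n r \<and> cnt i = \<nu> \<and> k \<in> Iset n r \<and> cnt k = \<mu> then x i k else 0) else 0)"
      unfolding 1 xil_eq by (subst mmul_def) (intro sum.cong, auto)
    thus "mmul n r (mmul n r (xil n r \<nu>) x) (xil n r \<mu>) i k = 
      (if i \<in> Iset n r \<and> cnt i = \<nu> \<and> k \<in> Iset n r \<and> cnt k = \<mu> then x i k else 0)"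
      using finite_Iset by simp
  qed
qed

lemma sum_xi:
  assumes "finite S"
  shows "(\<Sum>w\<in>S. c w * xi n r w i j) = (if i \<in> Iset n r \<and> j \<in> Iset n r \<and> wt i j \<in> S then c (wt i j) else 0)"
proof -
  have "(\<Sum>w\<in>S. c w * xi n r w i j) = (\<Sum>w\<in>S. if wt i j = w then (if i \<in> Iset n r \<and> j \<in> Iset n r then c w else 0) else 0)"
    unfolding xi_def by (intro sum.cong) auto
  thus ?thesis using assms by (simp add: sum.delta)
qed


lemma dom_lemma:
  assumes w: "w \<in> Lambda1 n r" and m1: "omega1 n w = \<mu>" and m2: "omega2 n w = \<nu>"
  shows "sdominates n \<nu> \<mu>"
proof -
  have z: "\<And>s t. s \<notin> {1..n} \<or> t \<notin> {1..n} \<Longrightarrow> w s t = 0"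
    and tri: "\<And>k l. l < k \<Longrightarrow> w k l = 0"
    and pos: "(\<Sum>k=1..n. \<Sum>l=1..n. if k \<le> l then (l - k) * w k l else 0) \<ge> 1"
    using w unfolding Lambda1_def mats_def by auto
  have hmu: "(\<Sum>s=1..T. \<mu> s) = (\<Sum>s=1..T. \<Sum>k=1..T. w k s)" if T: "T \<le> n" for T
  proof (intro sum.cong refl)
    fix s assume s: "s \<in> {1..T}"
    have "\<mu> s = (\<Sum>k=1..n. w k s)" using m1 unfolding omega1_def by auto
    also have "\<dots> = (\<Sum>k=1..T. w k s)"
      by (rule sum.mono_neutral_right) (use T s tri in auto)
    finally show "\<mu> s = (\<Sum>k=1..T. w k s)" .
  qed
  have hnu: "(\<Sum>s=1..T. \<nu> s) = (\<Sum>s=1..T. \<Sum>t=1..n. w s t)" for T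
    using m2 unfolding omega2_def by auto
  have ge: "(\<Sum>s=1..T. \<Sum>t=1..T. w s t) \<le> (\<Sum>s=1..T. \<Sum>t=1..n. w s t)" if "T \<le> n" for T
    by (intro sum_mono sum_mono2) (use that in auto)
  have dom: "dominates n \<nu> \<mu>"
    unfolding dominates_def
  proof
    fix T assume T: "T \<in> {1..n}"
    have "(\<Sum>s=1..T. \<mu> s) = (\<Sum>s=1..T. \<Sum>k=1..T. w s k)"
      using hmu[of T] T sum.swap[of "\<lambda>k s. w k s" "{1..T}" "{1..T}"] by auto
    thus "(\<Sum>s=1..T. \<mu> s) \<le> (\<Sum>s=1..T. \<nu> s)" using ge[of T] hnu[of T] T by auto
  qed
  obtain k l where kl: "k < l" "w k l > 0"
  proof (rule ccontr)
    assume "\<not> thesis"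
    hence "\<forall>k l. k < l \<longrightarrow> w k l = 0" using that by auto
    hence "(\<Sum>k=1..n. \<Sum>l=1..n. if k \<le> l then (l - k) * w k l else 0) = 0"
      by (intro sum.neutral ballI) (auto simp: le_less)
    thus False using pos by simp
  qed
  have kn: "k \<in> {1..n}" "l \<in> {1..n}" using kl z by (metis not_gr0)+
  have "(\<Sum>s=1..k. \<Sum>t=1..k. w s t) < (\<Sum>s=1..k. \<Sum>t=1..n. w s t)"
  proof (rule sum_strict_mono_ex1)
    show "finite {1..k}" by simp
    show "\<forall>x\<in>{1..k}. (\<Sum>t=1..k. w x t) \<le> (\<Sum>t=1..n. w x t)"
      using kn by (auto intro!: sum_mono2)
    have "(\<Sum>t=1..k. w k t) < w k l + (\<Sum>t=1..k. w k t)" using kl by simp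
    also have "\<dots> = (\<Sum>t\<in>insert l {1..k}. w k t)" using kl by simp
    also have "\<dots> \<le> (\<Sum>t=1..n. w k t)" using kn kl by (intro sum_mono2) auto
    finally show "\<exists>a\<in>{1..k}. (\<Sum>t=1..k. w a t) < (\<Sum>t=1..n. w a t)" using kn by auto
  qed
  moreover have "(\<Sum>s=1..k. \<mu> s) = (\<Sum>s=1..k. \<Sum>t=1..k. w s t)"
    using hmu[of k] kn sum.swap[of "\<lambda>k s. w k s" "{1..k}" "{1..k}"] by auto
  ultimately have "\<nu> \<noteq> \<mu>" using hnu[of k] by auto
  thus ?thesis using dom unfolding sdominates_def by simp
qed

lemma realize:
  assumes w: "w \<in> mats n r"
  shows "\<exists>i\<in>Iset n r. \<exists>j\<in>Iset n r. wt i j = w"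
proof -
  have z: "\<And>s t. s \<notin> {1..n} \<or> t \<notin> {1..n} \<Longrightarrow> w s t = 0"
    and sm: "(\<Sum>s=1..n. \<Sum>t=1..n. w s t) = r"
    using w unfolding mats_def by auto
  define ps where "ps = List.product [1..<n+1] [1..<n+1]"
  define L where "L = concat (map (\<lambda>p. replicate (w (fst p) (snd p)) p) ps)"
  have dps: "distinct ps" unfolding ps_def by (simp add: distinct_product)
  have sps: "set ps = {1..n} \<times> {1..n}" unfolding ps_def by auto
  have sL: "set L \<subseteq> set ps" unfolding L_def by auto
  have lenL: "length L = r"
  proof -
    have "length L = sum_list (map (\<lambda>p. w (fst p) (snd p)) ps)"
      unfolding L_def by (simp add: length_concat o_def)
    also have "\<dots> = (\<Sum>p\<in>{1..n} \<times> {1..n}. w (fst p) (snd p))"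
      using dps sps by (simp add: sum_list_distinct_conv_sum_set)
    also have "\<dots> = r" using sm by (simp add: sum.cartesian_product case_prod_beta)
    finally show ?thesis .
  qed
  have cntL: "length (filter (\<lambda>p. p = (s,t)) L) = w s t" for s t
  proof -
    have "length (filter (\<lambda>p. p = (s,t)) L) = sum_list (map (\<lambda>p. if p = (s,t) then w s t else 0) ps)"
      unfolding L_def by (simp add: filter_concat length_concat o_def filter_replicate if_distrib cong: if_cong)
    also have "\<dots> = (\<Sum>p\<in>{1..n} \<times> {1..n}. if p = (s,t) then w s t else 0)"
      using dps sps by (simp add: sum_list_distinct_conv_sum_set)
    also have "\<dots> = w s t" using z by (auto simp: sum.delta')
    finally show ?thesis .
  qed
  define i where "i = map fst L"
  define j where "j = map snd L"
  have "i \<in> Iset n r" "j \<in> Iset n r" unfolding i_def j_def Iset_def using lenL sL sps by auto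
  moreover have "wt i j = w"
  proof (intro ext)
    fix s t
    have "wt i j s t = card {q. q < length L \<and> L ! q = (s,t)}"
      unfolding wt_def i_def j_def by (intro arg_cong[where f=card]) (auto simp: prod_eq_iff)
    also have "\<dots> = w s t" using cntL[of s t] length_filter_conv_card[of "\<lambda>p. p = (s,t)" L] by simp
    finally show "wt i j s t = w s t" .
  qed
  ultimately show ?thesis by blast
qed


theorem proposition4p4:
  fixes n r :: nat and \<nu> \<mu> :: "nat \<Rightarrow> nat"
  assumes "0 < n" and "0 < r" and "\<nu> \<in> comps n r" and "\<mu> \<in> comps n r"
  shows "(\<not> sdominates n \<nu> \<mu> \<longrightarrow>
            (\<forall>x \<in> (Jset n r :: 'a::comm_ring_1 smat set).
               mmul n r (mmul n r (xil n r \<nu>) x) (xil n r \<mu>) = (\<lambda>i j. 0)))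
       \<and> (sdominates n \<nu> \<mu> \<longrightarrow>
            is_basis {w \<in> Lambda1 n r. omega1 n w = \<mu> \<and> omega2 n w = \<nu>}
              (xi n r)
              {mmul n r (mmul n r (xil n r \<nu>) x) (xil n r \<mu>) | x :: 'a smat. x \<in> Jset n r})"
proof (intro conjI impI)
  have fL: "finite (Lambda1 n r)" by (rule finite_Lambda1)
  {
    assume nd: "\<not> sdominates n \<nu> \<mu>"
    show "\<forall>x \<in> (Jset n r :: 'a::comm_ring_1 smat set).
               mmul n r (mmul n r (xil n r \<nu>) x) (xil n r \<mu>) = (\<lambda>i j. 0)"
    proof
      fix x :: "'a smat" assume "x \<in> Jset n r"
      then obtain c where c: "x = (\<lambda>i j. \<Sum>w\<in>Lambda1 n r. c w * xi n r w i j)"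
        unfolding Jset_def by auto
      show "mmul n r (mmul n r (xil n r \<nu>) x) (xil n r \<mu>) = (\<lambda>i j. 0)"
        unfolding triple
      proof (intro ext)
        fix i k
        show "(if i \<in> Iset n r \<and> cnt i = \<nu> \<and> k \<in> Iset n r \<and> cnt k = \<mu> then x i k else 0) = 0"
        proof (cases "i \<in> Iset n r \<and> cnt i = \<nu> \<and> k \<in> Iset n r \<and> cnt k = \<mu> \<and> wt i k \<in> Lambda1 n r")
          case True
          hence "sdominates n \<nu> \<mu>"
            using dom_lemma[of "wt i k" n r \<mu> \<nu>] omega1_wt[of i n r k] omega2_wt[of i n r k] by auto
          thus ?thesis using nd by simp
        next
          case False
          thus ?thesis unfolding c by (simp add: sum_xi[OF fL])
        qed
      qed
    qed
  }
  {
    assume sd: "sdominates n \<nu> \<mu>"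
    let ?X = "{w \<in> Lambda1 n r. omega1 n w = \<mu> \<and> omega2 n w = \<nu>}"
    let ?M = "{mmul n r (mmul n r (xil n r \<nu>) x) (xil n r \<mu>) | x :: 'a smat. x \<in> Jset n r}"
    have fX: "finite ?X" using fL by simp
    show "is_basis ?X (xi n r) ?M"
      unfolding is_basis_def
    proof (intro conjI ballI allI impI)
      fix w assume wX: "w \<in> ?X"
      have xJ: "(xi n r w :: 'a smat) \<in> Jset n r"
        unfolding Jset_def
      proof (intro CollectI exI[of _ "\<lambda>v. if v = w then 1 else 0"] ext)
        fix i j
        show "(xi n r w i j :: 'a) = (\<Sum>v\<in>Lambda1 n r. (if v = w then 1 else 0) * xi n r v i j)"
          unfolding sum_xi[OF fL] using wX by (auto simp: xi_def)
      qed
      have "mmul n r (mmul n r (xil n r \<nu>) (xi n r w)) (xil n r \<mu>) = (xi n r w :: 'a smat)"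
        unfolding triple
      proof (intro ext)
        fix i k
        show "(if i \<in> Iset n r \<and> cnt i = \<nu> \<and> k \<in> Iset n r \<and> cnt k = \<mu> then (xi n r w i k :: 'a) else 0) = xi n r w i k"
          using wX omega1_wt[of i n r k] omega2_wt[of i n r k] by (auto simp: xi_def)
      qed
      thus "(xi n r w :: 'a smat) \<in> ?M" using xJ by (metis (mono_tags, lifting) mem_Collect_eq)
    next
      fix c :: "_ \<Rightarrow> 'a" and w
      assume z: "(\<lambda>i j. \<Sum>w\<in>?X. c w * xi n r w i j) = (\<lambda>i j. 0)" and wX: "w \<in> ?X"
      have "w \<in> mats n r" using wX unfolding Lambda1_def by auto
      then obtain i j where ij: "i \<in> Iset n r" "j \<in> Iset n r" "wt i j = w" using realize by blast
      have "(\<Sum>w\<in>?X. c w * xi n r w i j) = 0" using z by (metis (no_types))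
      thus "c w = 0" unfolding sum_xi[OF fX] using ij wX by auto
    next
      fix x assume "x \<in> ?M"
      then obtain y where y: "y \<in> Jset n r" and x: "x = mmul n r (mmul n r (xil n r \<nu>) y) (xil n r \<mu>)"
        by blast
      then obtain c where c: "y = (\<lambda>i j. \<Sum>w\<in>Lambda1 n r. c w * xi n r w i j)"
        unfolding Jset_def by auto
      show "\<exists>c. x = (\<lambda>i j. \<Sum>w\<in>?X. c w * xi n r w i j)"
      proof (intro exI[of _ c] ext)
        fix i k
        show "x i k = (\<Sum>w\<in>?X. c w * xi n r w i k)"
          unfolding x triple sum_xi[OF fX] c sum_xi[OF fL]
          using omega1_wt[of i n r k] omega2_wt[of i n r k] by auto
      qed
    qed
  }
qed

end
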